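(* Let $S$ be an inverse semigroup that is a mirror semigroup, with semilattice of idempotents $\Sigma$. Then $S$ is stably continuous if and only if $\Sigma$ is stably continuous.
   Context: An inverse semigroup is a semigroup $S$ in which every $s$ has a unique $s^*$ with $ss^*s=s$ and $s^*ss^*=s^*$. $\Sigma=\Sigma(S)$ is the set of idempotents (itself an inverse semigroup, a semilattice). The intrinsic order is $s\leqslant t$ iff $s=t\epsilon$ for some idempotent $\epsilon$. A subset is directed if nonempty and any two elements have an upper bound in it. $S$ is a mirror semigroup if every directed subset of $\Sigma$ having a supremum in $(\Sigma,\leqslant)$ also has a supremum in $(S,\leqslant)$. In a poset, $x$ is way-below $y$ ($x\ll y$) if for every directed subset $D$ that has a supremum with $y\leqslant \sup D$, there is $d\in D$ with $x\leqslant d$. A poset is continuous if for every $s$ the set $\{t : t\ll s\}$ is directed with supremum $s$. An inverse semigroup $T$ is stably continuous if $(T,\leqslant)$ is continuous and its way-below relation $\ll$ is multiplicative, i.e. $s\ll t$ and $s'\ll t'$ imply $ss'\ll tt'$. For $\Sigma$ these notions are taken with respect to the poset $(\Sigma,\leqslant)$ and its own way-below relation. *)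

theory Defs
  imports Main
begin

definition inverse_semigroup :: "'a::semigroup_mult itself \<Rightarrow> bool" where
  "inverse_semigroup _ \<longleftrightarrow>
     (\<forall>s::'a. \<exists>!t::'a. s * t * s = s \<and> t * s * t = t)"

definition idems :: "'a::semigroup_mult set" where
  "idems = {e. e * e = e}"

definition ileq :: "'a::semigroup_mult \<Rightarrow> 'a \<Rightarrow> bool" where
  "ileq s t \<longleftrightarrow> (\<exists>e\<in>idems. s = t * e)"

definition directed_in :: "('a \<Rightarrow> 'a \<Rightarrow> bool) \<Rightarrow> 'a set \<Rightarrow> 'a set \<Rightarrow> bool" where
  "directed_in le A D \<longleftrightarrow> D \<subseteq> A \<and> D \<noteq> {} \<and>
     (\<forall>x\<in>D. \<forall>y\<in>D. \<exists>z\<in>D. le x z \<and> le y z)"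

definition is_sup_in :: "('a \<Rightarrow> 'a \<Rightarrow> bool) \<Rightarrow> 'a set \<Rightarrow> 'a set \<Rightarrow> 'a \<Rightarrow> bool" where
  "is_sup_in le A D x \<longleftrightarrow> x \<in> A \<and> (\<forall>d\<in>D. le d x) \<and>
     (\<forall>u\<in>A. (\<forall>d\<in>D. le d u) \<longrightarrow> le x u)"

definition way_below_in :: "('a \<Rightarrow> 'a \<Rightarrow> bool) \<Rightarrow> 'a set \<Rightarrow> 'a \<Rightarrow> 'a \<Rightarrow> bool" where
  "way_below_in le A x y \<longleftrightarrow>
     (\<forall>D s. directed_in le A D \<and> is_sup_in le A D s \<and> le y s \<longrightarrow> (\<exists>d\<in>D. le x d))"

definition continuous_in :: "('a \<Rightarrow> 'a \<Rightarrow> bool) \<Rightarrow> 'a set \<Rightarrow> bool" where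
  "continuous_in le A \<longleftrightarrow>
     (\<forall>s\<in>A. directed_in le A {t\<in>A. way_below_in le A t s} \<and>
             is_sup_in le A {t\<in>A. way_below_in le A t s} s)"

text \<open>Stably continuous: continuous with multiplicative way-below relation,
  with respect to the subposet A (A = UNIV for S, A = idems for Sigma).\<close>
definition stably_continuous_in :: "'a::semigroup_mult set \<Rightarrow> bool" where
  "stably_continuous_in A \<longleftrightarrow> continuous_in ileq A \<and>
     (\<forall>s\<in>A. \<forall>t\<in>A. \<forall>s'\<in>A. \<forall>t'\<in>A.
        way_below_in ileq A s t \<and> way_below_in ileq A s' t' \<longrightarrow>
        way_below_in ileq A (s * s') (t * t'))"

definition mirror_semigroup :: "'a::semigroup_mult itself \<Rightarrow> bool" where
  "mirror_semigroup _ \<longleftrightarrow>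
     (\<forall>D::'a set. directed_in ileq idems D \<and> (\<exists>x. is_sup_in ileq idems D x) \<longrightarrow>
        (\<exists>y. is_sup_in ileq UNIV D y))"

end

theory Submission
  imports Defs
begin


definition ginv :: "'a::semigroup_mult \<Rightarrow> 'a" where
  "ginv s = (THE t. s * t * s = s \<and> t * s * t = t)"

context assumes I: "inverse_semigroup TYPE('a::semigroup_mult)"
begin

lemma ginv_prop: fixes s :: 'a shows "s * ginv s * s = s" "ginv s * s * ginv s = ginv s"
proof -
  have "\<exists>!t::'a. s * t * s = s \<and> t * s * t = t" using I unfolding inverse_semigroup_def by blast
  from theI'[OF this] show "s * ginv s * s = s" "ginv s * s * ginv s = ginv s"
    unfolding ginv_def by auto
qed

lemma ginv_unique: fixes s t :: 'a assumes "s * t * s = s" "t * s * t = t" shows "t = ginv s"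
proof -
  have "\<exists>!t::'a. s * t * s = s \<and> t * s * t = t" using I unfolding inverse_semigroup_def by blast
  then show ?thesis using assms ginv_prop[of s] by blast
qed

lemma idem_ginv: fixes e :: 'a assumes "e * e = e" shows "ginv e = e"
  using ginv_unique[of e e] assms by (simp add: mult.assoc)

lemma idem_comm: fixes e f :: 'a assumes e: "e * e = e" and f: "f * f = f" shows "e * f = f * e"
proof -
  have idm: "\<And>a b :: 'a. a * a = a \<Longrightarrow> b * b = b \<Longrightarrow> (a * b) * (a * b) = a * b"
  proof -
    fix a b :: 'a assume a: "a * a = a" and b: "b * b = b"
    define x where "x = ginv (a * b)"
    have x1: "a * b * x * (a * b) = a * b" and x2: "x * (a * b) * x = x"
      using ginv_prop[of "a*b"] x_def by auto
    define y where "y = b * x * a"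
    have x2': "\<And>z. x*(a*(b*(x*z))) = x*z" using x2 by (metis mult.assoc)
    have y1: "y * y = y" unfolding y_def by (simp add: mult.assoc x2')
    have "(a * b) * y * (a * b) = a * b" unfolding y_def using x1 a b
      by (metis mult.assoc)
    moreover have "y * (a * b) * y = y" unfolding y_def using x2 a b
      by (metis mult.assoc)
    ultimately have "y = ginv (a * b)" by (rule ginv_unique)
    moreover have "a * b = ginv y"
      using ginv_unique[of y "a*b"] \<open>(a * b) * y * (a * b) = a * b\<close> \<open>y * (a * b) * y = y\<close>
      by (simp add: mult.assoc)
    ultimately show "(a * b) * (a * b) = a * b" using idem_ginv[OF y1] y1 by simp
  qed
  have ef: "(e*f)*(e*f) = e*f" and fe: "(f*e)*(f*e) = f*e" using idm e f by auto
  have "f * e = ginv (e * f)"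
    apply (rule ginv_unique)
    using ef fe e f by (metis mult.assoc)+
  then show ?thesis using idem_ginv[OF ef] by simp
qed

lemma ginv_ginv: fixes s :: 'a shows "ginv (ginv s) = s"
  using ginv_unique[of "ginv s" s] ginv_prop[of s] by (simp add: mult.assoc)

lemma idem_ss: fixes s :: 'a shows "(ginv s * s) * (ginv s * s) = ginv s * s"
  "(s * ginv s) * (s * ginv s) = s * ginv s"
  using ginv_prop[of s] by (metis mult.assoc)+

lemma ginv_mult: fixes s t :: 'a shows "ginv (s * t) = ginv t * ginv s"
proof -
  have c: "(t * ginv t) * (ginv s * s) = (ginv s * s) * (t * ginv t)"
    using idem_comm idem_ss by blast
  show ?thesis
  proof (rule ginv_unique[symmetric])
    have "s * t * (ginv t * ginv s) * (s * t) = s * ((t * ginv t) * (ginv s * s)) * t"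
      by (simp add: mult.assoc)
    also have "\<dots> = s * ((ginv s * s) * (t * ginv t)) * t" using c by simp
    also have "\<dots> = (s * ginv s * s) * (t * ginv t * t)" by (simp add: mult.assoc)
    finally show "s * t * (ginv t * ginv s) * (s * t) = s * t" using ginv_prop by simp
    have "ginv t * ginv s * (s * t) * (ginv t * ginv s) = ginv t * ((ginv s * s) * (t * ginv t)) * ginv s"
      by (simp add: mult.assoc)
    also have "\<dots> = ginv t * ((t * ginv t) * (ginv s * s)) * ginv s" using c by simp
    also have "\<dots> = (ginv t * t * ginv t) * (ginv s * s * ginv s)" by (simp add: mult.assoc)
    finally show "ginv t * ginv s * (s * t) * (ginv t * ginv s) = ginv t * ginv s" using ginv_prop by simp
  qed
qed


lemma idem_commr: fixes e f z :: 'a assumes "e * e = e" "f * f = f" shows "e * (f * z) = f * (e * z)"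
  using idem_comm[OF assms] by (metis mult.assoc)

lemma gp: fixes s z :: 'a shows "s * (ginv s * (s * z)) = s * z" "ginv s * (s * (ginv s * z)) = ginv s * z"
  "s * (ginv s * s) = s" "ginv s * (s * ginv s) = ginv s"
  using ginv_prop[of s] by (metis mult.assoc)+

lemma idem_r: fixes e z :: 'a assumes "e * e = e" shows "e * (e * z) = e * z"
  using assms by (metis mult.assoc)

lemma conj_idem: fixes e t :: 'a assumes "e * e = e" shows "(ginv t * e * t) * (ginv t * e * t) = ginv t * e * t"
proof -
  have "(ginv t * e * t) * (ginv t * e * t) = ginv t * (e * ((t * ginv t) * (e * t)))" by (simp add: mult.assoc)
  also have "\<dots> = ginv t * (t * ginv t) * (e * (e * t))"
    using idem_commr[OF assms idem_ss(2)[of t]] by (simp add: mult.assoc)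
  also have "\<dots> = ginv t * e * t" using assms by (simp add: mult.assoc gp idem_r)
  finally show ?thesis .
qed

lemma idems_iff: fixes e :: 'a shows "e \<in> idems \<longleftrightarrow> e * e = e" by (simp add: idems_def)

lemma ileq_right_char: fixes s t :: 'a shows "ileq s t \<longleftrightarrow> s = t * (ginv s * s)"
proof
  assume "ileq s t"
  then obtain e where e: "e * e = e" "s = t * e" unfolding ileq_def idems_def by auto
  have "t * (ginv s * s) = t * (e * ((ginv t * t) * e))"
    using e by (simp add: ginv_mult idem_ginv mult.assoc)
  also have "\<dots> = t * ((ginv t * t) * (e * e))"
    using idem_commr[OF e(1) idem_ss(1)[of t]] by (simp add: mult.assoc)
  also have "\<dots> = s" using e by (simp add: mult.assoc gp)
  finally show "s = t * (ginv s * s)" by simp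
next
  assume "s = t * (ginv s * s)"
  then show "ileq s t" unfolding ileq_def idems_def using idem_ss by blast
qed

lemma ileq_intro_r: fixes s t e :: 'a assumes "e * e = e" "s = t * e" shows "ileq s t"
  using assms unfolding ileq_def idems_def by blast

lemma ileq_intro_l: fixes s t e :: 'a assumes e: "e * e = e" and s: "s = e * t" shows "ileq s t"
proof (rule ileq_intro_r[OF conj_idem[OF e, of t]])
  have "t * (ginv t * e * t) = ((t * ginv t) * e) * t" by (simp add: mult.assoc)
  also have "\<dots> = (e * (t * ginv t)) * t" using idem_comm[OF idem_ss(2)[of t] e] by simp
  also have "\<dots> = s" using s by (simp add: mult.assoc gp)
  finally show "s = t * (ginv t * e * t)" by simp
qed

lemma ileq_left_char: fixes s t :: 'a shows "ileq s t \<longleftrightarrow> s = s * ginv s * t"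
proof
  assume "ileq s t"
  then obtain e where e: "e * e = e" "s = t * e" unfolding ileq_def idems_def by auto
  have "s * ginv s * t = t * (e * (ginv t * t))"
    using e by (simp add: ginv_mult idem_ginv mult.assoc idem_r[OF e(1)])
  also have "\<dots> = t * ginv t * t * e"
    using idem_comm[OF e(1) idem_ss(1)[of t]] by (simp add: mult.assoc)
  also have "\<dots> = s" using e by (simp add: mult.assoc gp)
  finally show "s = s * ginv s * t" by simp
next
  assume "s = s * ginv s * t"
  then show "ileq s t" using ileq_intro_l idem_ss by blast
qed

lemma ileq_refl: fixes s :: 'a shows "ileq s s"
  using ileq_right_char gp by auto

lemma ileq_trans: fixes s t u :: 'a assumes "ileq s t" "ileq t u" shows "ileq s u"
proof -
  obtain e where e: "e * e = e" "s = t * e" using assms(1) unfolding ileq_def idems_def by auto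
  obtain f where f: "f * f = f" "t = u * f" using assms(2) unfolding ileq_def idems_def by auto
  have "(f * e) * (f * e) = f * e" using idem_comm[OF e(1) f(1)] e f by (metis mult.assoc)
  then show ?thesis using e f by (intro ileq_intro_r[of "f*e"]) (auto simp: mult.assoc)
qed

lemma ileq_antisym: fixes s t :: 'a assumes "ileq s t" "ileq t s" shows "s = t"
proof -
  obtain e where e: "e * e = e" "s = t * e" using assms(1) unfolding ileq_def idems_def by auto
  obtain f where f: "f * f = f" "t = s * f" using assms(2) unfolding ileq_def idems_def by auto
  have "t = t * (e * f)" using e f by (metis mult.assoc)
  then have "t = t * (f * e)" using idem_comm[OF e(1) f(1)] by simp
  then have "t * e = t" using e(1) by (metis mult.assoc)
  then show ?thesis using e by simp
qed

lemma idem_down: fixes s e :: 'a assumes "ileq s e" "e * e = e" shows "s * s = s"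
proof -
  obtain f where f: "f * f = f" "s = e * f" using assms(1) unfolding ileq_def idems_def by auto
  show ?thesis using idem_comm[OF assms(2) f(1)] f assms(2) by (metis mult.assoc)
qed

lemma ileq_idem: fixes e f :: 'a assumes "e * e = e" "f * f = f" shows "ileq e f \<longleftrightarrow> e = f * e"
  using assms ileq_right_char idem_ginv by (metis ileq_intro_r)

lemma ileq_ginv: fixes s t :: 'a assumes "ileq s t" shows "ileq (ginv s) (ginv t)"
proof -
  have "s = s * ginv s * t" using assms ileq_left_char by blast
  then have "ginv s = ginv t * (s * ginv s)" by (metis ginv_mult ginv_ginv mult.assoc)
  then show ?thesis using ileq_intro_r idem_ss by blast
qed

lemma ileq_ginv_iff: fixes s t :: 'a shows "ileq (ginv s) (ginv t) \<longleftrightarrow> ileq s t"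
  using ileq_ginv ginv_ginv by metis

lemma ileq_mult: fixes s t s' t' :: 'a assumes "ileq s t" "ileq s' t'" shows "ileq (s * s') (t * t')"
proof -
  obtain e where e: "e * e = e" "s = e * t" using assms(1) ileq_left_char idem_ss by metis
  obtain f where f: "f * f = f" "s' = t' * f" using assms(2) unfolding ileq_def idems_def by auto
  have "ileq (e * (t * t' * f)) (t * t' * f)" by (rule ileq_intro_l[OF e(1)]) simp
  moreover have "ileq (t * t' * f) (t * t')" by (rule ileq_intro_r[OF f(1)]) simp
  ultimately show ?thesis using e f ileq_trans by (simp add: mult.assoc)
qed

lemma ileq_ss: fixes s t :: 'a assumes "ileq s t" shows "ileq (ginv s * s) (ginv t * t)"
  using ileq_mult[OF ileq_ginv[OF assms] assms] .

lemma ileq_mult_idem_r: fixes s e :: 'a assumes "e * e = e" shows "ileq (s * e) s"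
  using ileq_intro_r[OF assms] by simp

lemma ileq_mult_idem_l: fixes s e :: 'a assumes "e * e = e" shows "ileq (e * s) s"
  using ileq_intro_l[OF assms] by simp


lemma wb_le: fixes x y :: 'a assumes "way_below_in ileq A x y" "y \<in> A" shows "ileq x y"
proof -
  have "directed_in ileq A {y}" using assms(2) ileq_refl unfolding directed_in_def by auto
  moreover have "is_sup_in ileq A {y} y" using assms(2) ileq_refl unfolding is_sup_in_def by auto
  ultimately show ?thesis using assms(1) ileq_refl unfolding way_below_in_def by blast
qed

lemma wb_mono: fixes x x' y :: 'a assumes "ileq x x'" "way_below_in ileq A x' y" shows "way_below_in ileq A x y"
  using assms ileq_trans unfolding way_below_in_def by blast

lemma K1: fixes x y :: 'a assumes xy: "ileq x y" and wb: "way_below_in ileq idems (ginv x * x) (ginv y * y)"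
  shows "way_below_in ileq UNIV x y"
  unfolding way_below_in_def
proof (intro allI impI, elim conjE)
  fix D s assume dD: "directed_in ileq UNIV D" and sD: "is_sup_in ileq UNIV D s" and ys: "ileq y s"
  define D' where "D' = (\<lambda>d. ginv d * d) ` D"
  have dD': "directed_in ileq idems D'"
    unfolding directed_in_def
  proof (intro conjI ballI)
    show "D' \<subseteq> idems" unfolding D'_def using idem_ss idems_iff by auto
    show "D' \<noteq> {}" using dD unfolding D'_def directed_in_def by auto
    fix a' b' assume "a' \<in> D'" "b' \<in> D'"
    then obtain a b where ab: "a \<in> D" "b \<in> D" "a' = ginv a * a" "b' = ginv b * b" unfolding D'_def by auto
    then obtain c where "c \<in> D" "ileq a c" "ileq b c" using dD unfolding directed_in_def by blast
    then show "\<exists>z\<in>D'. ileq a' z \<and> ileq b' z" using ab ileq_ss unfolding D'_def by blast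
  qed
  have ub: "\<forall>d\<in>D. ileq d s" using sD unfolding is_sup_in_def by auto
  have sD': "is_sup_in ileq idems D' (ginv s * s)"
    unfolding is_sup_in_def
  proof (intro conjI ballI impI)
    show "ginv s * s \<in> idems" using idem_ss idems_iff by auto
    show "ileq d' (ginv s * s)" if "d' \<in> D'" for d'
      using that ub ileq_ss unfolding D'_def by auto
    fix u assume u: "u \<in> idems" and uu: "\<forall>d'\<in>D'. ileq d' u"
    have uu2: "u * u = u" using u idems_iff by auto
    have "ileq d (s * u)" if d: "d \<in> D" for d
    proof -
      have d1: "d = s * (ginv d * d)" using ub d ileq_right_char by blast
      have "ileq (ginv d * d) u" using uu d unfolding D'_def by auto
      then have "ginv d * d = u * (ginv d * d)" using ileq_idem idem_ss uu2 by blast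
      then have "d = (s * u) * (ginv d * d)" using d1 by (metis mult.assoc)
      then show ?thesis using ileq_intro_r idem_ss by blast
    qed
    then have "ileq s (s * u)" using sD unfolding is_sup_in_def by auto
    then have "ileq (ginv s * s) (ginv (s * u) * (s * u))" by (rule ileq_ss)
    also have "ginv (s * u) * (s * u) = u * (ginv s * s * u)"
      by (simp add: ginv_mult idem_ginv[OF uu2] mult.assoc)
    also have "\<dots> = (ginv s * s) * u"
      using idem_comm[OF uu2 idem_ss(1)[of s]] uu2 by (metis mult.assoc)
    finally have "ileq (ginv s * s) ((ginv s * s) * u)" .
    moreover have "ileq ((ginv s * s) * u) u" using ileq_mult_idem_l idem_ss by blast
    ultimately show "ileq (ginv s * s) u" using ileq_trans by blast
  qed
  have "ileq (ginv y * y) (ginv s * s)" using ys ileq_ss by blast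
  then obtain d' where d': "d' \<in> D'" "ileq (ginv x * x) d'"
    using wb dD' sD' unfolding way_below_in_def by blast
  then obtain d where d: "d \<in> D" "d' = ginv d * d" unfolding D'_def by auto
  have xs: "ileq x s" using xy ys ileq_trans by blast
  have x1: "x = s * (ginv x * x)" using xs ileq_right_char by blast
  have d1: "d = s * (ginv d * d)" using ub d ileq_right_char by blast
  have e: "ginv x * x = (ginv d * d) * (ginv x * x)" using d' d ileq_idem idem_ss by blast
  have "d * (ginv x * x) = s * ((ginv d * d) * (ginv x * x))" using d1 by (metis mult.assoc)
  also have "\<dots> = x" using e x1 by simp
  finally have "ileq x d" using ileq_intro_r idem_ss by metis
  then show "\<exists>d\<in>D. ileq x d" using d by blast
qed

end


context assumes I: "inverse_semigroup TYPE('a::semigroup_mult)"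
begin

lemma WS_ginv: fixes x y :: 'a assumes wb: "way_below_in ileq UNIV x y"
  shows "way_below_in ileq UNIV (ginv x) (ginv y)"
  unfolding way_below_in_def
proof (intro allI impI, elim conjE)
  fix D s assume dD: "directed_in ileq UNIV D" and sD: "is_sup_in ileq UNIV D s" and ys: "ileq (ginv y) s"
  define D' where "D' = ginv ` D"
  have dD': "directed_in ileq UNIV D'"
    unfolding directed_in_def
  proof (intro conjI ballI)
    show "D' \<noteq> {}" using dD unfolding D'_def directed_in_def by auto
    fix a' b' assume "a' \<in> D'" "b' \<in> D'"
    then obtain a b where ab: "a \<in> D" "b \<in> D" "a' = ginv a" "b' = ginv b" unfolding D'_def by auto
    then obtain c where "c \<in> D" "ileq a c" "ileq b c" using dD unfolding directed_in_def by blast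
    then show "\<exists>z\<in>D'. ileq a' z \<and> ileq b' z" using ab ileq_ginv[OF I] unfolding D'_def by blast
  qed simp
  have sD': "is_sup_in ileq UNIV D' (ginv s)"
    unfolding is_sup_in_def
  proof (intro conjI ballI impI)
    show "ginv s \<in> UNIV" by simp
    show "ileq d' (ginv s)" if "d' \<in> D'" for d'
      using that sD ileq_ginv[OF I] unfolding D'_def is_sup_in_def by auto
    fix u :: 'a assume "\<forall>d'\<in>D'. ileq d' u"
    then have "\<forall>d\<in>D. ileq (ginv d) u" unfolding D'_def by auto
    then have "\<forall>d\<in>D. ileq d (ginv u)" using ileq_ginv_iff[OF I] ginv_ginv[OF I] by metis
    then have "ileq s (ginv u)" using sD unfolding is_sup_in_def by auto
    then show "ileq (ginv s) u" using ileq_ginv_iff[OF I] ginv_ginv[OF I] by metis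
  qed
  have "ileq y (ginv s)" using ys ileq_ginv_iff[OF I] ginv_ginv[OF I] by metis
  then obtain d' where "d' \<in> D'" "ileq x d'" using wb dD' sD' unfolding way_below_in_def by blast
  then obtain d where "d \<in> D" "ileq x (ginv d)" unfolding D'_def by auto
  then show "\<exists>d\<in>D. ileq (ginv x) d" using ileq_ginv_iff[OF I] ginv_ginv[OF I] by metis
qed

end

context assumes I: "inverse_semigroup TYPE('a::semigroup_mult)"
  and M: "mirror_semigroup TYPE('a)"
begin

lemma mirror_sup: fixes D :: "'a set" and x :: 'a
  assumes dD: "directed_in ileq idems D" and sD: "is_sup_in ileq idems D x"
  shows "is_sup_in ileq UNIV D x"
proof -
  obtain y :: 'a where y: "is_sup_in ileq UNIV D y" using M dD sD unfolding mirror_semigroup_def by blast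
  have xi: "x * x = x" using sD idems_iff[OF I] unfolding is_sup_in_def by auto
  have "ileq y x" using y sD unfolding is_sup_in_def by auto
  then have yi: "y * y = y" using idem_down[OF I] xi by blast
  have "ileq x y" using y sD yi idems_iff[OF I] unfolding is_sup_in_def by auto
  then have "x = y" using \<open>ileq y x\<close> ileq_antisym[OF I] by blast
  then show ?thesis using y by simp
qed

lemma lemL: fixes E :: "'a set" and s :: 'a
  assumes dE: "directed_in ileq idems E" and sE: "is_sup_in ileq idems E (ginv s * s)"
  shows "directed_in ileq UNIV ((*) s ` E)" "is_sup_in ileq UNIV ((*) s ` E) s"
proof -
  show "directed_in ileq UNIV ((*) s ` E)"
    unfolding directed_in_def
  proof (intro conjI ballI)
    show "(*) s ` E \<noteq> {}" using dE unfolding directed_in_def by auto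
    fix a' b' assume "a' \<in> (*) s ` E" "b' \<in> (*) s ` E"
    then obtain a b where ab: "a \<in> E" "b \<in> E" "a' = s * a" "b' = s * b" by auto
    then obtain c where "c \<in> E" "ileq a c" "ileq b c" using dE unfolding directed_in_def by blast
    then show "\<exists>z\<in>(*) s ` E. ileq a' z \<and> ileq b' z" using ab ileq_mult[OF I ileq_refl[OF I]] by blast
  qed simp
  have Ei: "\<And>e. e \<in> E \<Longrightarrow> e * e = e" using dE idems_iff[OF I] unfolding directed_in_def by auto
  have Ele: "\<And>e. e \<in> E \<Longrightarrow> e = (ginv s * s) * e"
    using sE Ei ileq_idem[OF I] idem_ss[OF I] unfolding is_sup_in_def by blast
  show "is_sup_in ileq UNIV ((*) s ` E) s"
    unfolding is_sup_in_def
  proof (intro conjI ballI impI)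
    show "s \<in> UNIV" by simp
    show "ileq d s" if "d \<in> (*) s ` E" for d
      using that Ei ileq_mult_idem_r[OF I] by auto
    fix u assume uu: "\<forall>d\<in>(*) s ` E. ileq d u"
    have "ileq e (ginv s * u)" if e: "e \<in> E" for e
    proof -
      have "ileq (s * e) u" using uu e by auto
      then have "s * e = u * (ginv (s * e) * (s * e))" using ileq_right_char[OF I] by blast
      also have "ginv (s * e) * (s * e) = e * ((ginv s * s) * e)"
        by (simp add: ginv_mult[OF I] idem_ginv[OF I Ei[OF e]] mult.assoc)
      also have "\<dots> = e" using Ele[OF e] Ei[OF e] by (metis mult.assoc)
      finally have "s * e = u * e" .
      then have "ginv s * u * e = (ginv s * s) * e" by (simp add: mult.assoc)
      also have "\<dots> = e" using Ele[OF e] by simp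
      finally show ?thesis using ileq_intro_r[OF I Ei[OF e]] by metis
    qed
    then have "ileq (ginv s * s) (ginv s * u)"
      using mirror_sup[OF dE sE] unfolding is_sup_in_def by auto
    then have "ginv s * s = ginv s * u * (ginv s * s)"
      using ileq_right_char[OF I] idem_ginv[OF I] idem_ss[OF I] by metis
    then have "s = (s * ginv s) * (u * (ginv s * s))"
      using gp[OF I] by (metis mult.assoc)
    then have "ileq s (u * (ginv s * s))" using ileq_intro_l[OF I] idem_ss[OF I] by blast
    moreover have "ileq (u * (ginv s * s)) u" using ileq_mult_idem_r[OF I] idem_ss[OF I] by blast
    ultimately show "ileq s u" using ileq_trans[OF I] by blast
  qed
qed

lemma K2: fixes x y :: 'a assumes cont: "continuous_in ileq (idems :: 'a set)" and wb: "way_below_in ileq UNIV x y"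
  shows "way_below_in ileq idems (ginv x * x) (ginv y * y)"
proof -
  define E where "E = {t\<in>idems. way_below_in ileq idems t (ginv y * y)}"
  have yi: "ginv y * y \<in> idems" using idem_ss[OF I] idems_iff[OF I] by auto
  have dsE: "directed_in ileq idems E \<and> is_sup_in ileq idems E (ginv y * y)"
    unfolding E_def by (rule bspec[OF cont[unfolded continuous_in_def] yi])
  have dE: "directed_in ileq idems E" using dsE by blast
  have sE: "is_sup_in ileq idems E (ginv y * y)" using dsE by blast
  obtain d where d: "d \<in> (*) y ` E" "ileq x d"
    using wb lemL[OF dE sE] ileq_refl[OF I] unfolding way_below_in_def by blast
  then obtain g where g: "g \<in> E" "d = y * g" by auto
  have gi: "g * g = g" using g idems_iff[OF I] unfolding E_def by auto
  have gwb: "way_below_in ileq idems g (ginv y * y)" using g unfolding E_def by auto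
  have "ileq g (ginv y * y)" using wb_le[OF I gwb yi] .
  then have gle: "g = (ginv y * y) * g" using ileq_idem[OF I gi idem_ss(1)[OF I]] by blast
  have "ileq (ginv x * x) (ginv d * d)" using ileq_ss[OF I d(2)] .
  also have "ginv d * d = g * ((ginv y * y) * g)"
    using g by (simp add: ginv_mult[OF I] idem_ginv[OF I gi] mult.assoc)
  also have "\<dots> = g" using gle gi by (metis mult.assoc)
  finally show ?thesis using wb_mono[OF I _ gwb] by blast
qed

end


context assumes I: "inverse_semigroup TYPE('a::semigroup_mult)"
  and M: "mirror_semigroup TYPE('a)"
begin

lemma WE_WS: fixes e f :: 'a assumes e: "e \<in> idems" and f: "f \<in> idems"
  shows "way_below_in ileq idems e f \<longleftrightarrow> way_below_in ileq UNIV e f"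
proof
  assume wb: "way_below_in ileq idems e f"
  have ei: "e * e = e" and fi: "f * f = f" using e f idems_iff[OF I] by auto
  have "ileq e f" using wb_le[OF I wb f] .
  then show "way_below_in ileq UNIV e f"
    using K1[OF I] wb idem_ginv[OF I ei] idem_ginv[OF I fi] ei fi by metis
next
  assume wb: "way_below_in ileq UNIV e f"
  show "way_below_in ileq idems e f"
    unfolding way_below_in_def
  proof (intro allI impI, elim conjE)
    fix D s assume dD: "directed_in ileq idems D" and sD: "is_sup_in ileq idems D s" and fs: "ileq f s"
    have "directed_in ileq UNIV D" using dD unfolding directed_in_def by auto
    moreover have "is_sup_in ileq UNIV D s" using mirror_sup[OF I M dD sD] .
    ultimately show "\<exists>d\<in>D. ileq e d" using wb fs unfolding way_below_in_def by blast
  qed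
qed

lemma idem_mult: fixes e f :: 'a assumes "e * e = e" "f * f = f" shows "(e * f) * (e * f) = e * f"
proof -
  have "(e * f) * (e * f) = e * ((f * e) * f)" by (simp add: mult.assoc)
  also have "\<dots> = e * ((e * f) * f)" using idem_comm[OF I assms] by simp
  also have "\<dots> = e * f" using assms by (metis mult.assoc)
  finally show ?thesis .
qed

lemma dir1: assumes "stably_continuous_in (UNIV :: 'a set)" shows "stably_continuous_in (idems :: 'a set)"
proof -
  have C: "continuous_in ileq (UNIV :: 'a set)" and Mu: "\<And>s t s' t' :: 'a.
     way_below_in ileq UNIV s t \<Longrightarrow> way_below_in ileq UNIV s' t' \<Longrightarrow>
        way_below_in ileq UNIV (s * s') (t * t')"
    using assms unfolding stably_continuous_in_def by auto
  have C2: "continuous_in ileq (idems :: 'a set)"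
    unfolding continuous_in_def
  proof (intro ballI)
    fix e :: 'a assume e: "e \<in> idems"
    have eq: "{t\<in>idems. way_below_in ileq idems t e} = {t\<in>UNIV. way_below_in ileq UNIV t e}"
    proof (intro set_eqI iffI)
      fix t assume "t \<in> {t\<in>idems. way_below_in ileq idems t e}"
      then show "t \<in> {t\<in>UNIV. way_below_in ileq UNIV t e}" using WE_WS e by blast
    next
      fix t assume "t \<in> {t\<in>UNIV. way_below_in ileq UNIV t e}"
      then have wb: "way_below_in ileq UNIV t e" by simp
      have "ileq t e" using wb_le[OF I wb] by simp
      then have "t \<in> idems" using idem_down[OF I] e idems_iff[OF I] by blast
      then show "t \<in> {t\<in>idems. way_below_in ileq idems t e}" using WE_WS e wb by blast
    qed
    have sub: "{t\<in>idems. way_below_in ileq idems t e} \<subseteq> idems" by auto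
    have d: "directed_in ileq UNIV {t\<in>UNIV. way_below_in ileq UNIV t e}"
      and s: "is_sup_in ileq UNIV {t\<in>UNIV. way_below_in ileq UNIV t e} e"
      using C unfolding continuous_in_def by blast+
    have sub2: "{t\<in>UNIV. way_below_in ileq UNIV t e} \<subseteq> idems" using sub eq by simp
    have "directed_in ileq idems {t\<in>UNIV. way_below_in ileq UNIV t e}"
      using d sub2 unfolding directed_in_def by blast
    moreover have "is_sup_in ileq idems {t\<in>UNIV. way_below_in ileq UNIV t e} e"
      using s e unfolding is_sup_in_def by blast
    ultimately show "directed_in ileq idems {t\<in>idems. way_below_in ileq idems t e} \<and>
          is_sup_in ileq idems {t\<in>idems. way_below_in ileq idems t e} e"
      unfolding eq by blast
  qed
  show ?thesis unfolding stably_continuous_in_def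
  proof (intro conjI C2 ballI impI, elim conjE)
    fix s t s' t' :: 'a assume ids: "s \<in> idems" "t \<in> idems" "s' \<in> idems" "t' \<in> idems"
      and w1: "way_below_in ileq idems s t" and w2: "way_below_in ileq idems s' t'"
    have m: "s * s' \<in> idems" "t * t' \<in> idems"
      using ids idems_iff[OF I] idem_mult by auto
    have "way_below_in ileq UNIV (s * s') (t * t')" using Mu w1 w2 WE_WS ids by blast
    then show "way_below_in ileq idems (s * s') (t * t')" using WE_WS m by blast
  qed
qed


lemma dir2: assumes "stably_continuous_in (idems :: 'a set)" shows "stably_continuous_in (UNIV :: 'a set)"
proof -
  have C: "continuous_in ileq (idems :: 'a set)" and Mu: "\<And>s t s' t' :: 'a.
     s \<in> idems \<Longrightarrow> t \<in> idems \<Longrightarrow> s' \<in> idems \<Longrightarrow> t' \<in> idems \<Longrightarrow>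
     way_below_in ileq idems s t \<Longrightarrow> way_below_in ileq idems s' t' \<Longrightarrow>
        way_below_in ileq idems (s * s') (t * t')"
    using assms unfolding stably_continuous_in_def by auto
  have ssi: "\<And>s::'a. ginv s * s \<in> idems" "\<And>s::'a. s * ginv s \<in> idems"
    using idem_ss[OF I] idems_iff[OF I] by auto
  have C2: "continuous_in ileq (UNIV :: 'a set)"
    unfolding continuous_in_def
  proof (intro ballI)
    fix s :: 'a
    define E where "E = {t\<in>idems. way_below_in ileq idems t (ginv s * s)}"
    have dE: "directed_in ileq idems E"
      using C ssi unfolding continuous_in_def E_def by blast
    have sE: "is_sup_in ileq idems E (ginv s * s)"
      using C ssi unfolding continuous_in_def E_def by blast
    have eq: "{t\<in>UNIV. way_below_in ileq UNIV t s} = (*) s ` E"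
    proof (intro set_eqI iffI)
      fix t assume "t \<in> {t\<in>UNIV. way_below_in ileq UNIV t s}"
      then have wb: "way_below_in ileq UNIV t s" by simp
      have "ileq t s" using wb_le[OF I wb] by simp
      then have "t = s * (ginv t * t)" using ileq_right_char[OF I] by blast
      moreover have "ginv t * t \<in> E" using K2[OF I M C wb] ssi unfolding E_def by blast
      ultimately show "t \<in> (*) s ` E" by blast
    next
      fix t assume "t \<in> (*) s ` E"
      then obtain e where e: "e \<in> E" "t = s * e" by blast
      have ei: "e * e = e" using e idems_iff[OF I] unfolding E_def by auto
      have we: "way_below_in ileq idems e (ginv s * s)" using e unfolding E_def by auto
      have "ileq e (ginv s * s)" using wb_le[OF I we ssi(1)] .
      then have ele: "e = (ginv s * s) * e" using ileq_idem[OF I ei idem_ss(1)[OF I]] by blast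
      have "ginv t * t = e * ((ginv s * s) * e)"
        using e by (simp add: ginv_mult[OF I] idem_ginv[OF I ei] mult.assoc)
      also have "\<dots> = e" using ele ei by (metis mult.assoc)
      finally have "way_below_in ileq idems (ginv t * t) (ginv s * s)" using we by simp
      moreover have "ileq t s" using e ileq_mult_idem_r[OF I ei] by simp
      ultimately show "t \<in> {t\<in>UNIV. way_below_in ileq UNIV t s}" using K1[OF I] by blast
    qed
    show "directed_in ileq UNIV {t\<in>UNIV. way_below_in ileq UNIV t s} \<and>
          is_sup_in ileq UNIV {t\<in>UNIV. way_below_in ileq UNIV t s} s"
      unfolding eq using lemL[OF I M dE sE] by blast
  qed
  show ?thesis unfolding stably_continuous_in_def
  proof (intro conjI C2 ballI impI, elim conjE)
    fix s t s' t' :: 'a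
    assume w1: "way_below_in ileq UNIV s t" and w2: "way_below_in ileq UNIV s' t'"
    have st: "ileq s t" using wb_le[OF I w1] by simp
    have st': "ileq s' t'" using wb_le[OF I w2] by simp
    have a: "way_below_in ileq idems (ginv s * s) (ginv t * t)" using K2[OF I M C w1] .
    have b: "way_below_in ileq idems (s' * ginv s') (t' * ginv t')"
      using K2[OF I M C WS_ginv[OF I w2]] ginv_ginv[OF I] by simp
    define k where "k = (ginv s * s) * (s' * ginv s')"
    define m where "m = (ginv t * t) * (t' * ginv t')"
    have km: "way_below_in ileq idems k m" unfolding k_def m_def using Mu[OF ssi(1) ssi(1) ssi(2) ssi(2) a b] .
    define x where "x = ginv s * s * s'"
    define y where "y = ginv t * t * t'"
    have xy: "ileq x y" unfolding x_def y_def using ileq_mult[OF I ileq_ss[OF I st] st'] .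
    have eef: "\<And>e f :: 'a. e * e = e \<Longrightarrow> f * f = f \<Longrightarrow> e * f * e = e * f"
      using idem_comm[OF I] by (metis mult.assoc)
    have xx: "x * ginv x = k" unfolding x_def k_def
      using eef[OF idem_ss(1)[OF I, of s] idem_ss(2)[OF I, of s']]
      by (simp add: ginv_mult[OF I] idem_ginv[OF I idem_ss(1)[OF I]] mult.assoc ginv_ginv[OF I])
    have yy: "y * ginv y = m" unfolding y_def m_def
      using eef[OF idem_ss(1)[OF I, of t] idem_ss(2)[OF I, of t']]
      by (simp add: ginv_mult[OF I] idem_ginv[OF I idem_ss(1)[OF I]] mult.assoc ginv_ginv[OF I])
    have "way_below_in ileq UNIV (ginv x) (ginv y)"
      using K1[OF I ileq_ginv[OF I xy]] km xx yy ginv_ginv[OF I] by simp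
    then have "way_below_in ileq UNIV x y" using WS_ginv[OF I] ginv_ginv[OF I] by metis
    then have c: "way_below_in ileq idems (ginv x * x) (ginv y * y)" using K2[OF I M C] by blast
    have gx: "\<And>s s' :: 'a. ginv (ginv s * s * s') * (ginv s * s * s') = ginv (s * s') * (s * s')"
      by (simp add: ginv_mult[OF I] idem_ginv[OF I idem_ss(1)[OF I]] mult.assoc gp[OF I])
    have "way_below_in ileq idems (ginv (s * s') * (s * s')) (ginv (t * t') * (t * t'))"
      using c gx unfolding x_def y_def by simp
    then show "way_below_in ileq UNIV (s * s') (t * t')"
      using K1[OF I ileq_mult[OF I st st']] by blast
  qed
qed

end

theorem corollary5p4:
  assumes "inverse_semigroup TYPE('a::semigroup_mult)"
    and "mirror_semigroup TYPE('a)"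
  shows "stably_continuous_in (UNIV :: 'a set) \<longleftrightarrow> stably_continuous_in (idems :: 'a set)"
  using dir1[OF assms] dir2[OF assms] by blast

end
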